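(* Let $p$ be a prime, $n\geq 3$, and $V$ an $n$-dimensional vector space over $\mathbb{F}_p$. Let $X\subseteq SL(V)$ be a symmetric generating set of $SL(V)$ (i.e. $X=X^{-1}$) with $1\in X$, and suppose $X$ contains a transvection $t$. Let $$\mathcal{C}_n=\{x_n\cdots x_1\, t\, x_1^{-1}\cdots x_n^{-1}\,:\,x_1,\ldots,x_n\in X\}=\{r_1=t,r_2,\ldots,r_m\},$$ and write $r_i=1+v_i\otimes\phi_i$ for $1\le i\le m$. Then $\langle v_1,\ldots,v_m\rangle=V$, and the transvection graph $\Gamma(\mathcal{C}_n)$ contains a directed cycle.
   Context: A transvection is an element $1+d\otimes\phi\in SL(V)$, acting by $x\mapsto x+\phi(x)d$, with $0\neq d\in V$, $0\neq\phi\in V^*$, $\phi(d)=0$. For a set $Y$ of transvections, the transvection graph $\Gamma(Y)$ is the directed graph with vertex set $Y\setminus\{1\}$ and a directed edge from $1+d_1\otimes\phi_1$ to $1+d_2\otimes\phi_2$ if and only if $\phi_2(d_1)\neq 0$. *)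

theory Defs
  imports "HOL-Analysis.Analysis"
begin

text \<open>V = 'a^'n, with 'a a finite field of prime cardinality p (i.e. F_p) and CARD('n) = n.
  Linear maps of V are matrices 'a^'n^'n acting by (*v).\<close>

definition SL :: "('a::field ^ 'n ^ 'n) set" where
  "SL = {A. det A = 1}"

definition pairing :: "'a::field ^ 'n \<Rightarrow> 'a ^ 'n \<Rightarrow> 'a" where
  "pairing \<phi> x = (\<Sum>i\<in>UNIV. \<phi> $ i * x $ i)"

text \<open>The matrix of the map x \<mapsto> phi(x) d.\<close>
definition tensor :: "'a::field ^ 'n \<Rightarrow> 'a ^ 'n \<Rightarrow> 'a ^ 'n ^ 'n" where
  "tensor d \<phi> = (\<chi> i j. d $ i * \<phi> $ j)"

text \<open>M = 1 + d \<otimes> phi is a transvection with data d, phi.\<close>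
definition transv_rep :: "'a::field ^ 'n ^ 'n \<Rightarrow> 'a ^ 'n \<Rightarrow> 'a ^ 'n \<Rightarrow> bool" where
  "transv_rep M d \<phi> \<longleftrightarrow> d \<noteq> 0 \<and> \<phi> \<noteq> 0 \<and> pairing \<phi> d = 0 \<and> M = mat 1 + tensor d \<phi>"

definition is_transvection :: "'a::field ^ 'n ^ 'n \<Rightarrow> bool" where
  "is_transvection M \<longleftrightarrow> (\<exists>d \<phi>. transv_rep M d \<phi>)"

text \<open>Edge relation of the transvection graph.\<close>
definition tv_edge :: "'a::field ^ 'n ^ 'n \<Rightarrow> 'a ^ 'n ^ 'n \<Rightarrow> bool" where
  "tv_edge M N \<longleftrightarrow> (\<exists>d1 \<phi>1 d2 \<phi>2. transv_rep M d1 \<phi>1 \<and> transv_rep N d2 \<phi>2 \<and> pairing \<phi>2 d1 \<noteq> 0)"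

text \<open>The transvection graph Gamma(Y) (vertex set Y - {1}) contains a directed cycle.\<close>
definition tv_graph_has_cycle :: "('a::field ^ 'n ^ 'n) set \<Rightarrow> bool" where
  "tv_graph_has_cycle Y \<longleftrightarrow> (\<exists>cs. length cs \<ge> 2 \<and> distinct cs \<and> set cs \<subseteq> Y - {mat 1} \<and>
      (\<forall>i < length cs. tv_edge (cs ! i) (cs ! ((i + 1) mod length cs))))"

text \<open>Subgroup of GL generated by a set of matrices.\<close>
inductive_set generated :: "('a::field ^ 'n ^ 'n) set \<Rightarrow> ('a ^ 'n ^ 'n) set" for X where
  gen_one: "mat 1 \<in> generated X"
| gen_base: "x \<in> X \<Longrightarrow> x \<in> generated X"
| gen_mult: "a \<in> generated X \<Longrightarrow> b \<in> generated X \<Longrightarrow> a ** b \<in> generated X"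
| gen_inv: "a \<in> generated X \<Longrightarrow> matrix_inv a \<in> generated X"

text \<open>words X k = {x_k ** ... ** x_1 | x_i in X}.\<close>
fun words :: "('a::field ^ 'n ^ 'n) set \<Rightarrow> nat \<Rightarrow> ('a ^ 'n ^ 'n) set" where
  "words X 0 = {mat 1}"
| "words X (Suc k) = {x ** w | x w. x \<in> X \<and> w \<in> words X k}"

text \<open>C_k = {x_k...x_1 t x_1^-1 ... x_k^-1}.\<close>
definition conj_set :: "('a::field ^ 'n ^ 'n) set \<Rightarrow> nat \<Rightarrow> 'a ^ 'n ^ 'n \<Rightarrow> ('a ^ 'n ^ 'n) set" where
  "conj_set X k t = {w ** t ** matrix_inv w | w. w \<in> words X k}"

end

theory Submission
  imports Defs
begin


lemma inv_props:
  fixes A :: "'a::field^'n^'n"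
  assumes "invertible A"
  shows "A ** matrix_inv A = mat 1 \<and> matrix_inv A ** A = mat 1"
  using assms unfolding invertible_def matrix_inv_def by (rule someI_ex)

lemma inv_unique:
  fixes A B :: "'a::field^'n^'n"
  assumes "A ** B = mat 1" "B ** A = mat 1"
  shows "matrix_inv A = B"
proof -
  have inv: "invertible A" using assms unfolding invertible_def by blast
  from inv_props[OF inv] have "matrix_inv A = matrix_inv A ** (A ** B)" using assms by simp
  also have "\<dots> = (matrix_inv A ** A) ** B" by (simp add: matrix_mul_assoc)
  also have "\<dots> = B" using inv_props[OF inv] by simp
  finally show ?thesis .
qed

lemma inv_mat1: "matrix_inv (mat 1 :: 'a::field^'n^'n) = mat 1"
  by (rule inv_unique) simp_all

lemma inv_mult:
  fixes A B :: "'a::field^'n^'n"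
  assumes "invertible A" "invertible B"
  shows "matrix_inv (A ** B) = matrix_inv B ** matrix_inv A"
proof (rule inv_unique)
  have a: "A ** matrix_inv A = mat 1" "matrix_inv A ** A = mat 1" using inv_props[OF assms(1)] by auto
  have b: "B ** matrix_inv B = mat 1" "matrix_inv B ** B = mat 1" using inv_props[OF assms(2)] by auto
  have "A ** B ** (matrix_inv B ** matrix_inv A) = A ** (B ** matrix_inv B) ** matrix_inv A"
    by (simp add: matrix_mul_assoc)
  then show "A ** B ** (matrix_inv B ** matrix_inv A) = mat 1" using a b by simp
  have "matrix_inv B ** matrix_inv A ** (A ** B) = matrix_inv B ** (matrix_inv A ** A) ** B"
    by (simp add: matrix_mul_assoc)
  then show "matrix_inv B ** matrix_inv A ** (A ** B) = mat 1" using a b by simp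
qed

lemma inv_inv:
  fixes A :: "'a::field^'n^'n"
  assumes "invertible A"
  shows "invertible (matrix_inv A) \<and> matrix_inv (matrix_inv A) = A"
  using inv_props[OF assms] inv_unique[of "matrix_inv A" A] unfolding invertible_def by blast

lemma SL_invertible: "A \<in> SL \<Longrightarrow> invertible (A::'a::field^'n^'n)"
  unfolding SL_def by (simp add: invertible_det_nz)

lemma words_SL: "X \<subseteq> SL \<Longrightarrow> w \<in> words X k \<Longrightarrow> w \<in> (SL::('a::field^'n^'n) set)"
  by (induction k arbitrary: w) (auto simp: SL_def det_mul)

lemma one_words: "mat 1 \<in> X \<Longrightarrow> mat 1 \<in> words X k"
  by (induction k) force+

lemma words_mono: "mat 1 \<in> X \<Longrightarrow> words X k \<subseteq> words X (Suc k)"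
proof (induction k)
  case 0 then show ?case by force
next
  case (Suc k)
  show ?case
  proof
    fix w assume "w \<in> words X (Suc k)"
    then obtain x w' where a: "w = x ** w'" "x \<in> X" "w' \<in> words X k" by auto
    have "w' \<in> words X (Suc k)" using Suc.IH Suc.prems a(3) by blast
    then show "w \<in> words X (Suc (Suc k))" unfolding words.simps(2)[of X "Suc k"] using a by blast
  qed
qed

lemma pairing_add: "pairing \<phi> (x + y) = pairing \<phi> x + pairing \<phi> y"
  by (simp add: pairing_def distrib_left sum.distrib)

lemma pairing_zero: "pairing \<phi> 0 = 0"
  by (simp add: pairing_def)

lemma pairing_scale: "pairing \<phi> (c *s x) = c * pairing \<phi> x"
  by (simp add: pairing_def sum_distrib_left mult_ac)

lemma pairing_axis: "pairing \<phi> (axis i 1) = \<phi> $ i"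
proof -
  have "pairing \<phi> (axis i 1) = (\<Sum>k\<in>UNIV. if k = i then \<phi>$k else 0)"
    unfolding pairing_def by (rule sum.cong) (auto simp: axis_def)
  then show ?thesis by simp
qed

lemma pairing_axis2: "pairing (axis i c) x = c * x $ i"
proof -
  have "pairing (axis i c) x = (\<Sum>k\<in>UNIV. if k = i then c * x$k else 0)"
    unfolding pairing_def by (rule sum.cong) (auto simp: axis_def)
  then show ?thesis by simp
qed

lemma pairing_vm: "pairing (\<phi> v* A) x = pairing \<phi> (A *v x)"
proof -
  have "pairing (\<phi> v* A) x = (\<Sum>j\<in>UNIV. \<Sum>i\<in>UNIV. A$i$j * \<phi>$i * x$j)"
    unfolding pairing_def vector_matrix_mult_def by (simp add: sum_distrib_left sum_distrib_right mult_ac)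
  also have "\<dots> = (\<Sum>i\<in>UNIV. \<Sum>j\<in>UNIV. A$i$j * \<phi>$i * x$j)"
    by (rule sum.swap)
  also have "\<dots> = pairing \<phi> (A *v x)"
    unfolding pairing_def matrix_vector_mult_def by (simp add: sum_distrib_left mult_ac)
  finally show ?thesis .
qed

lemma tensor_apply: "tensor d \<phi> *v x = pairing \<phi> x *s d"
  by (simp add: vec_eq_iff tensor_def matrix_vector_mult_def pairing_def sum_distrib_left mult_ac)

lemma tv_apply: "transv_rep M d \<phi> \<Longrightarrow> M *v x = x + pairing \<phi> x *s d"
  unfolding transv_rep_def by (simp add: matrix_vector_mult_add_rdistrib tensor_apply)

lemma mv_scale: "(A::'a::field^'n^'n) *v (c *s x) = c *s (A *v x)"
  by (simp add: vec_eq_iff matrix_vector_mult_def sum_distrib_left mult_ac)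

lemma transv_ne1: "transv_rep M d \<phi> \<Longrightarrow> M \<noteq> mat 1"
proof
  assume r: "transv_rep M d \<phi>" and m: "M = mat 1"
  obtain i where i: "d $ i \<noteq> 0" using r unfolding transv_rep_def by (metis vec_eq_iff zero_index)
  obtain j where j: "\<phi> $ j \<noteq> 0" using r unfolding transv_rep_def by (metis vec_eq_iff zero_index)
  have "M *v axis j 1 = axis j 1" using m by simp
  then have e: "pairing \<phi> (axis j 1) *s d = 0" using tv_apply[OF r] by simp
  have "(pairing \<phi> (axis j 1) *s d) $ i = 0" by (subst e) simp
  then have "\<phi> $ j * d $ i = 0" by (simp only: vector_smult_component pairing_axis)
  then show False using i j by simp
qed

lemma no_self_loop: "\<not> tv_edge M M"
proof
  assume "tv_edge M M"
  then obtain d1 p1 d2 p2 where r1: "transv_rep M d1 p1" and r2: "transv_rep M d2 p2"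
    and ne: "pairing p2 d1 \<noteq> 0" unfolding tv_edge_def by blast
  have "pairing p1 d1 = 0" using r1 unfolding transv_rep_def by blast
  then have "M *v d1 = d1" using tv_apply[OF r1, of d1] by simp
  then have e: "pairing p2 d1 *s d2 = 0" using tv_apply[OF r2, of d1] by simp
  have "d2 \<noteq> 0" using r2 unfolding transv_rep_def by simp
  then obtain i where i: "d2 $ i \<noteq> 0" by (metis vec_eq_iff zero_index)
  have "(pairing p2 d1 *s d2) $ i = 0" by (subst e) simp
  then have "pairing p2 d1 * d2 $ i = 0" by (simp only: vector_smult_component)
  then show False using i ne by simp
qed

lemma conj_transv:
  fixes w :: "'a::field^'n^'n"
  assumes w: "invertible w" and r: "transv_rep M d \<phi>"
  shows "transv_rep (w ** M ** matrix_inv w) (w *v d) (\<phi> v* matrix_inv w)"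
proof -
  let ?wi = "matrix_inv w"
  have wi: "w ** ?wi = mat 1" "?wi ** w = mat 1" using inv_props[OF w] by auto
  have d: "d \<noteq> 0" "\<phi> \<noteq> 0" "pairing \<phi> d = 0" using r unfolding transv_rep_def by auto
  have f1: "w *v d \<noteq> 0"
  proof
    assume "w *v d = 0"
    then have "?wi *v (w *v d) = 0" by simp
    then have "d = 0" by (simp add: matrix_vector_mul_assoc wi)
    then show False using d by simp
  qed
  have f2: "\<phi> v* ?wi \<noteq> 0"
  proof
    assume "\<phi> v* ?wi = 0"
    then have "(\<phi> v* ?wi) v* w = 0" by simp
    then have "\<phi> = 0" by (simp add: vector_matrix_mul_assoc wi)
    then show False using d by simp
  qed
  have f3: "pairing (\<phi> v* ?wi) (w *v d) = 0"
    by (simp add: pairing_vm matrix_vector_mul_assoc wi d)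
  have f4: "w ** M ** ?wi = mat 1 + tensor (w *v d) (\<phi> v* ?wi)"
  proof (rule iffD2[OF matrix_eq], rule allI)
    fix x
    have "(w ** M ** ?wi) *v x = w *v (M *v (?wi *v x))" by (simp add: matrix_vector_mul_assoc matrix_mul_assoc)
    also have "\<dots> = w *v (?wi *v x + pairing \<phi> (?wi *v x) *s d)" using tv_apply[OF r] by simp
    also have "\<dots> = x + pairing \<phi> (?wi *v x) *s (w *v d)"
      by (simp add: matrix_vector_right_distrib mv_scale matrix_vector_mul_assoc wi)
    also have "\<dots> = (mat 1 + tensor (w *v d) (\<phi> v* ?wi)) *v x"
      by (simp add: matrix_vector_mult_add_rdistrib tensor_apply pairing_vm)
    finally show "(w ** M ** ?wi) *v x = (mat 1 + tensor (w *v d) (\<phi> v* ?wi)) *v x" .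
  qed
  show ?thesis unfolding transv_rep_def using f1 f2 f3 f4 by (intro conjI)
qed

lemma elem_SL:
  fixes i j :: "'n::finite" and c :: "'a::field"
  assumes "i \<noteq> j"
  shows "mat 1 + tensor (axis j 1) (axis i c) \<in> (SL :: ('a^'n^'n) set)"
proof -
  let ?A = "mat 1 :: 'a^'n^'n"
  have "mat 1 + tensor (axis j 1) (axis i c) = (\<chi> k. if k = j then row j ?A + c *s row i ?A else row k ?A)"
    by (auto simp: vec_eq_iff tensor_def axis_def mat_def row_def)
  moreover have "det (\<chi> k. if k = j then row j ?A + c *s row i ?A else row k ?A) = det ?A"
    using assms by (intro det_row_operation) auto
  ultimately show ?thesis by (simp add: SL_def)
qed

lemma irreducible:
  fixes W :: "('a::field^'n) set"
  assumes sub: "vec.subspace W" and ne: "W \<noteq> {0}" and inv: "\<forall>A\<in>SL. \<forall>w\<in>W. A *v w \<in> W"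
    and card: "CARD('n) \<ge> 2"
  shows "W = UNIV"
proof -
  have key: "(c * w$i) *s axis j 1 \<in> W" if w: "w \<in> W" and ij: "(i::'n) \<noteq> j" for w i j c
  proof -
    let ?E = "mat 1 + tensor (axis j 1) (axis i c) :: 'a^'n^'n"
    have "?E *v w \<in> W" using inv elem_SL[OF ij] w by blast
    then have "?E *v w - w \<in> W" using w sub by (simp add: vec.subspace_diff)
    moreover have "?E *v w - w = (c * w$i) *s axis j 1"
      by (simp add: matrix_vector_mult_add_rdistrib tensor_apply pairing_axis2)
    ultimately show ?thesis by simp
  qed
  obtain w where w: "w \<in> W" "w \<noteq> 0" using ne sub vec.subspace_0 by blast
  then obtain i where i: "w$i \<noteq> 0" by (metis vec_eq_iff zero_index)
  have other: "axis j 1 \<in> W" if "j \<noteq> i" for j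
    using key[OF w(1), of i j "inverse (w$i)"] i that by simp
  have "\<exists>j. j \<noteq> i"
  proof (rule ccontr)
    assume "\<not> (\<exists>j. j \<noteq> i)"
    then have "(UNIV::'n set) = {i}" by auto
    then have "CARD('n) = 1" by (metis card_1_singleton_iff One_nat_def)
    then show False using card by simp
  qed
  then obtain j where j: "j \<noteq> i" by blast
  have "axis i 1 \<in> W"
    using key[OF other[OF j], of j i 1] j by (simp add: axis_def)
  then have all: "axis k 1 \<in> W" for k using other by (cases "k = i") auto
  have "x \<in> W" for x
  proof -
    have "(\<Sum>k\<in>UNIV. x$k *s axis k 1) \<in> W"
      by (rule vec.subspace_sum[OF sub]) (simp add: vec.subspace_scale[OF sub all])
    then show ?thesis by (simp add: basis_expansion)
  qed
  then show ?thesis by auto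
qed

lemma gen_invariant:
  fixes X :: "('a::field^'n^'n) set"
  assumes XSL: "X \<subseteq> SL" and Xinv: "\<forall>x\<in>X. matrix_inv x \<in> X"
    and XW: "\<forall>x\<in>X. \<forall>w\<in>W. x *v w \<in> W"
    and a: "a \<in> generated X"
  shows "invertible a \<and> (\<forall>w\<in>W. a *v w \<in> W) \<and> (\<forall>w\<in>W. matrix_inv a *v w \<in> W)"
  using a
proof induction
  case gen_one
  have "invertible (mat 1 :: 'a^'n^'n)" unfolding invertible_def by (rule exI[of _ "mat 1"]) simp
  then show ?case by (simp add: inv_mat1)
next
  case (gen_base x) then show ?case using XSL Xinv XW SL_invertible by blast
next
  case (gen_mult a b)
  have "invertible (a ** b)" using gen_mult by (simp add: invertible_det_nz det_mul)
  moreover have "\<forall>w\<in>W. (a ** b) *v w \<in> W" using gen_mult by (simp add: matrix_vector_mul_assoc[symmetric])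
  moreover have "\<forall>w\<in>W. matrix_inv (a ** b) *v w \<in> W" using gen_mult
    by (simp add: inv_mult matrix_vector_mul_assoc[symmetric])
  ultimately show ?case by blast
next
  case (gen_inv a)
  then have "invertible a" by blast
  then have ii: "invertible (matrix_inv a)" "matrix_inv (matrix_inv a) = a" using inv_inv by blast+
  show ?case unfolding ii(2) using ii(1) gen_inv by blast
qed




lemma cycle_exists:
  fixes f :: "'b \<Rightarrow> 'b"
  assumes fin: "finite S" and r0: "r0 \<in> S" and fS: "\<forall>r\<in>S. f r \<in> S \<and> E (f r) r"
    and irr: "\<forall>r\<in>S. \<not> E r r"
  shows "\<exists>cs. length cs \<ge> 2 \<and> distinct cs \<and> set cs \<subseteq> S \<and>
      (\<forall>i < length cs. E (cs ! i) (cs ! ((i + 1) mod length cs)))"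
proof -
  have inS: "(f^^k) r \<in> S" if "r \<in> S" for k r using that fS by (induction k) auto
  have "\<not> inj_on (\<lambda>k. (f^^k) r0) {..card S}"
  proof
    assume "inj_on (\<lambda>k. (f^^k) r0) {..card S}"
    moreover have "(\<lambda>k. (f^^k) r0) ` {..card S} \<subseteq> S" using inS r0 by auto
    ultimately have "card {..card S} \<le> card S" using card_inj_on_le fin by blast
    then show False by simp
  qed
  then obtain a b where ab0: "a \<noteq> b" "(f^^a) r0 = (f^^b) r0"
    unfolding inj_on_def by blast
  then obtain a b where ab: "a < b" "(f^^a) r0 = (f^^b) r0"
    by (metis linorder_neqE_nat)
  define y where "y = (f^^a) r0"
  have y: "y \<in> S" using inS r0 y_def by simp
  have "(f^^(b-a)) y = (f^^(b - a + a)) r0" unfolding y_def by (simp add: funpow_add)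
  then have per: "(f^^(b-a)) y = y" using ab unfolding y_def by simp
  define p where "p = (LEAST q. 0 < q \<and> (f^^q) y = y)"
  have p: "0 < p \<and> (f^^p) y = y" unfolding p_def by (rule LeastI[of _ "b-a"]) (use ab per in auto)
  have pmin: "\<not> (0 < q \<and> (f^^q) y = y)" if "q < p" for q
    using not_less_Least[of q "\<lambda>q. 0 < q \<and> (f^^q) y = y"] that unfolding p_def by blast
  have "p \<noteq> 1"
  proof
    assume "p = 1"
    then have "f y = y" using p by simp
    then show False using fS irr y by metis
  qed
  then have p2: "p \<ge> 2" using p by linarith
  have dist: "(f^^m) y \<noteq> (f^^n) y" if mn: "m < n" "n < p" for m n
  proof
    assume eq: "(f^^m) y = (f^^n) y"
    have "(f^^(p - n + m)) y = (f^^(p-n)) ((f^^m) y)" by (simp add: funpow_add)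
    also have "\<dots> = (f^^(p-n)) ((f^^n) y)" using eq by simp
    also have "\<dots> = (f^^(p - n + n)) y" by (simp add: funpow_add)
    also have "\<dots> = y" using p mn by simp
    finally have "(f^^(p - n + m)) y = y" .
    moreover have "0 < p - n + m" "p - n + m < p" using mn by arith+
    ultimately show False using pmin by blast
  qed
  define cs where "cs = map (\<lambda>k. (f^^(p - 1 - k)) y) [0..<p]"
  have len: "length cs = p" by (simp add: cs_def)
  have nth: "cs ! k = (f^^(p - 1 - k)) y" if "k < p" for k using that by (simp add: cs_def)
  show ?thesis
  proof (intro exI conjI allI impI)
    show "2 \<le> length cs" using len p2 by simp
    show "distinct cs" unfolding distinct_conv_nth len
    proof (intro allI impI)
      fix k l assume kl: "k < p" "l < p" "k \<noteq> l"
      show "cs!k \<noteq> cs!l"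
      proof (cases "k < l")
        case True
        have "p-1-l < p-1-k" "p-1-k < p" using kl True by arith+
        then have "(f^^(p-1-l)) y \<noteq> (f^^(p-1-k)) y" by (rule dist)
        then show ?thesis using nth[OF kl(1)] nth[OF kl(2)] by simp
      next
        case False
        have "p-1-k < p-1-l" "p-1-l < p" using kl False by arith+
        then have "(f^^(p-1-k)) y \<noteq> (f^^(p-1-l)) y" by (rule dist)
        then show ?thesis using nth[OF kl(1)] nth[OF kl(2)] by simp
      qed
    qed
    show "set cs \<subseteq> S" using inS y by (auto simp: cs_def)
    fix i assume i: "i < length cs"
    show "E (cs!i) (cs!((i+1) mod length cs))"
    proof (cases "i + 1 < p")
      case True
      let ?z = "(f^^(p-2-i)) y"
      have "(i+1) mod length cs = i + 1" using len True by simp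
      then have 1: "cs!((i+1) mod length cs) = ?z" using nth[of "i+1"] True by (simp add: numeral_2_eq_2)
      have "p - 1 - i = Suc (p-2-i)" using True by arith
      then have 2: "cs!i = f ?z" using nth[of i] i len by simp
      have "?z \<in> S" using inS y by blast
      then have "E (f ?z) ?z" using fS by blast
      then show ?thesis using 1 2 by simp
    next
      case False
      then have ip: "i = p - 1" using i len by simp
      let ?z = "(f^^(p-1)) y"
      have "(i+1) mod length cs = 0" using len ip p by simp
      then have 1: "cs!((i+1) mod length cs) = ?z" using nth[of 0] p by simp
      have 2: "cs!i = y" using nth[of i] len ip p by simp
      have "(f^^(Suc (p-1))) y = f ?z" by simp
      moreover have "Suc (p - 1) = p" using p by simp
      ultimately have 3: "f ?z = y" using p by simp
      have "?z \<in> S" using inS y by blast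
      then have "E (f ?z) ?z" using fS by blast
      then show ?thesis using 1 2 3 by simp
    qed
  qed
qed



theorem theorem3p1:
  fixes X :: "('a::{field,finite} ^ 'n ^ 'n) set" and t :: "'a ^ 'n ^ 'n" and p n :: nat
  assumes "prime p" and "CARD('a) = p"
    and "CARD('n) = n" and "n \<ge> 3"
    and "X \<subseteq> SL" and "\<forall>x\<in>X. matrix_inv x \<in> X" and "generated X = SL"
    and "mat 1 \<in> X"
    and "t \<in> X" and "is_transvection t"
  shows "(\<forall>v \<phi>. (\<forall>r\<in>conj_set X n t. transv_rep r (v r) (\<phi> r))
              \<longrightarrow> vec.span (v ` conj_set X n t) = UNIV)
         \<and> tv_graph_has_cycle (conj_set X n t)"
proof -
  obtain d0 \<phi>0 where t: "transv_rep t d0 \<phi>0" using assms(10) unfolding is_transvection_def by blast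
  define U where "U k = {r *v y - y | r y. r \<in> conj_set X k t}" for k
  define W where "W k = vec.span (U k)" for k
  have winv: "invertible w" if "w \<in> words X k" for w k
    using words_SL[OF assms(5) that] SL_invertible by blast
  have step: "x *v u \<in> U (Suc k)" if x: "x \<in> X" and u: "u \<in> U k" for x u k
  proof -
    obtain r y where u': "u = r *v y - y" "r \<in> conj_set X k t" using u unfolding U_def by auto
    then obtain w where w: "w \<in> words X k" "r = w ** t ** matrix_inv w" unfolding conj_set_def by auto
    have xi: "invertible x" using x assms(5) SL_invertible by blast
    have wi: "invertible w" using winv w by blast
    have xw: "x ** w \<in> words X (Suc k)" using x w by auto
    have "x ** r ** matrix_inv x = (x ** w) ** t ** matrix_inv (x ** w)"
      using w by (simp add: inv_mult xi wi matrix_mul_assoc)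
    then have cr: "x ** r ** matrix_inv x \<in> conj_set X (Suc k) t" using xw unfolding conj_set_def by blast
    have "(x ** r ** matrix_inv x) *v (x *v y) = x *v (r *v (matrix_inv x *v (x *v y)))"
      by (simp add: matrix_vector_mul_assoc matrix_mul_assoc)
    also have "matrix_inv x *v (x *v y) = y" using inv_props[OF xi] by (simp add: matrix_vector_mul_assoc)
    finally have "x *v u = (x ** r ** matrix_inv x) *v (x *v y) - x *v y"
      using u' by (simp add: matrix_vector_mult_diff_distrib)
    then show ?thesis unfolding U_def using cr by blast
  qed
  have Umono: "U k \<subseteq> U (Suc k)" for k
  proof -
    have "conj_set X k t \<subseteq> conj_set X (Suc k) t"
      unfolding conj_set_def using words_mono[OF assms(8), of k] by blast
    then show ?thesis unfolding U_def by blast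
  qed
  have Wmono: "W k \<subseteq> W (Suc k)" for k unfolding W_def by (rule vec.span_mono[OF Umono])
  have tC0: "t \<in> conj_set X k t" for k
  proof -
    have "mat 1 ** t ** matrix_inv (mat 1) = t" by (simp add: inv_mat1)
    then show ?thesis unfolding conj_set_def using one_words[OF assms(8), of k] by force
  qed
  have "t \<noteq> mat 1" using transv_ne1[OF t] .
  then obtain y where y: "t *v y \<noteq> y" using matrix_eq[of t "mat 1"] by auto
  have nz: "W k \<noteq> {0}" for k
  proof
    assume "W k = {0}"
    moreover have "t *v y - y \<in> U k" unfolding U_def using tC0 by blast
    then have "t *v y - y \<in> W k" unfolding W_def by (rule vec.span_base)
    ultimately show False using y by simp
  qed
  have card2: "CARD('n) \<ge> 2" using assms(3,4) by simp
  have stable: "W k = UNIV" if h: "W (Suc k) \<subseteq> W k" for k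
  proof -
    have sub: "vec.subspace (W k)" unfolding W_def by simp
    have XW: "\<forall>x\<in>X. \<forall>w\<in>W k. x *v w \<in> W k"
    proof (intro ballI)
      fix x w assume x: "x \<in> X" and w: "w \<in> W k"
      have s2: "vec.subspace {w. x *v w \<in> W k}"
        unfolding vec.subspace_def using sub
        by (simp add: matrix_vector_right_distrib mv_scale vec.subspace_add vec.subspace_scale vec.subspace_0)
      have "U k \<subseteq> {w. x *v w \<in> W k}"
      proof
        fix u assume "u \<in> U k"
        then have "x *v u \<in> U (Suc k)" using step x by blast
        then have "x *v u \<in> W (Suc k)" unfolding W_def by (rule vec.span_base)
        then show "u \<in> {w. x *v w \<in> W k}" using h by blast
      qed
      then have "W k \<subseteq> {w. x *v w \<in> W k}" unfolding W_def by (rule vec.span_minimal[OF _ s2[unfolded W_def]])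
      then show "x *v w \<in> W k" using w by blast
    qed
    have "\<forall>A\<in>SL. \<forall>w\<in>W k. A *v w \<in> W k"
      using gen_invariant[OF assms(5) assms(6) XW] assms(7) by blast
    then show ?thesis by (rule irreducible[OF sub nz[of k] _ card2])
  qed
  have dimk: "W k = UNIV \<or> k + 1 \<le> vec.dim (W k)" for k
  proof (induction k)
    case 0
    have "\<not> W 0 \<subseteq> {0}" using nz[of 0] vec.subspace_0[of "W 0"] unfolding W_def by auto
    then have "vec.dim (W 0) \<noteq> 0" using vec.dim_eq_0[of "W 0"] by simp
    then have "0 < vec.dim (W 0)" using not_gr0 by blast
    then show ?case by (intro disjI2) linarith
  next
    case (Suc k)
    show ?case
    proof (cases "W k = UNIV")
      case True then show ?thesis using Wmono[of k] by auto
    next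
      case False
      then have d: "k + 1 \<le> vec.dim (W k)" using Suc by blast
      have "\<not> W (Suc k) \<subseteq> W k" using stable False by blast
      then have "vec.span (U k) \<subset> vec.span (U (Suc k))" using Wmono[of k] unfolding W_def by blast
      then have "vec.dim (U k) < vec.dim (U (Suc k))" by (rule vec.dim_psubset)
      then have "vec.dim (W k) < vec.dim (W (Suc k))" unfolding W_def by simp
      then show ?thesis using d by simp
    qed
  qed
  have WU: "W n = UNIV"
    using dimk[of n] dim_subset_UNIV_cart_gen[of "W n"] assms(3) by auto
  have part1: "vec.span (v ` conj_set X n t) = UNIV"
    if reps: "\<forall>r\<in>conj_set X n t. transv_rep r (v r) (\<phi> r)" for v \<phi>
  proof -
    have "U n \<subseteq> vec.span (v ` conj_set X n t)"
    proof
      fix u assume "u \<in> U n"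
      then obtain r y where ry: "u = r *v y - y" "r \<in> conj_set X n t" unfolding U_def by auto
      then have "u = pairing (\<phi> r) y *s v r" using tv_apply[of r "v r" "\<phi> r" y] reps by simp
      moreover have "v r \<in> vec.span (v ` conj_set X n t)" using ry(2) by (intro vec.span_base) blast
      ultimately show "u \<in> vec.span (v ` conj_set X n t)" by (simp add: vec.span_scale)
    qed
    then have "W n \<subseteq> vec.span (v ` conj_set X n t)" unfolding W_def
      by (rule vec.span_minimal) simp
    then show ?thesis using WU by auto
  qed
  let ?C = "conj_set X n t"
  have allT: "\<exists>d \<phi>. transv_rep r d \<phi>" if rC: "r \<in> ?C" for r
  proof -
    obtain w where w: "w \<in> words X n" "r = w ** t ** matrix_inv w" using rC unfolding conj_set_def by auto
    show ?thesis using conj_transv[OF winv[OF w(1)] t] w(2) by blast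
  qed
  define v :: "'a^'n^'n \<Rightarrow> 'a^'n" where "v r = (SOME d. \<exists>\<phi>. transv_rep r d \<phi>)" for r
  define \<psi> :: "'a^'n^'n \<Rightarrow> 'a^'n" where "\<psi> r = (SOME \<phi>. transv_rep r (v r) \<phi>)" for r
  have reps: "\<forall>r\<in>?C. transv_rep r (v r) (\<psi> r)"
  proof
    fix r assume "r \<in> ?C"
    then have "\<exists>d \<phi>. transv_rep r d \<phi>" by (rule allT)
    then have "\<exists>\<phi>. transv_rep r (v r) \<phi>" unfolding v_def by (rule someI_ex)
    then show "transv_rep r (v r) (\<psi> r)" unfolding \<psi>_def by (rule someI_ex)
  qed
  have span: "vec.span (v ` ?C) = UNIV" using part1 reps by blast
  have cyc: "tv_graph_has_cycle ?C"
  proof (rule ccontr)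
    assume nc: "\<not> tv_graph_has_cycle ?C"
    have "\<exists>r\<in>?C. \<forall>s\<in>?C. \<not> tv_edge s r"
    proof (rule ccontr)
      assume "\<not> (\<exists>r\<in>?C. \<forall>s\<in>?C. \<not> tv_edge s r)"
      then have "\<forall>r\<in>?C. \<exists>s. s \<in> ?C \<and> tv_edge s r" by blast
      then obtain f where f: "\<forall>r\<in>?C. f r \<in> ?C \<and> tv_edge (f r) r" by metis
      have fin: "finite ?C" by (rule finite)
      have "\<exists>cs. length cs \<ge> 2 \<and> distinct cs \<and> set cs \<subseteq> ?C \<and>
          (\<forall>i < length cs. tv_edge (cs ! i) (cs ! ((i + 1) mod length cs)))"
        using cycle_exists[where E=tv_edge, OF fin tC0[of n] f] no_self_loop by blast
      moreover have "?C - {mat 1} = ?C" using reps transv_ne1 by blast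
      ultimately have "tv_graph_has_cycle ?C" unfolding tv_graph_has_cycle_def by simp
      then show False using nc by blast
    qed
    then obtain r where r: "r \<in> ?C" "\<forall>s\<in>?C. \<not> tv_edge s r" by blast
    have z: "pairing (\<psi> r) (v s) = 0" if "s \<in> ?C" for s
      using r reps that unfolding tv_edge_def by blast
    have sub: "vec.subspace {x. pairing (\<psi> r) x = 0}"
      unfolding vec.subspace_def by (simp add: pairing_add pairing_scale pairing_zero)
    have "vec.span (v ` ?C) \<subseteq> {x. pairing (\<psi> r) x = 0}"
      by (rule vec.span_minimal[OF _ sub]) (use z in auto)
    then have "pairing (\<psi> r) (axis i 1) = 0" for i using span by auto
    then have "\<psi> r = 0" by (simp add: pairing_axis vec_eq_iff)
    then show False using reps r unfolding transv_rep_def by auto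
  qed
  show ?thesis using part1 cyc by blast
qed

end
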